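(* Assume (A1) and $b\ne0$. Define the equivalence relation $j\sim k$ on $[K]$ by $x(I_j,b)=x(I_k,b)$, with equivalence classes $\mathcal B_1,\dots,\mathcal B_T$. Then there exists $\epsilon>0$ such that for every $\tilde b\in\mathbb{R}^m$ with $P(\tilde b)\ne\emptyset$ and $\|\tilde b-b\|<\epsilon$, and for every $1\le t\le T$, there exists $k\in\mathcal B_t$ with $x(I_k,\tilde b)\in OPT(\tilde b)$.
   Context: $A\in\mathbb{R}^{m\times d}$ of full rank $m\le d$, $b\in\mathbb{R}^m$, $c\in\mathbb{R}^d$. For $\beta\in\mathbb{R}^m$, $(\mathrm{P}_\beta)$ is $\min c^Tx$ s.t. $Ax=\beta,x\ge0$, $P(\beta)=\{x:Ax=\beta,x\ge0\}$, and $OPT(\beta)$ its optimal set. A basis is $I\subseteq[d]$, $|I|=m$, $A_I$ invertible; $x(I,\beta)$ has coordinates $(A_I)^{-1}\beta$ on $I$ and $0$ elsewhere; $\lambda(I)=(A_I)^{-T}c_I$; $I$ is dual feasible if $A^T\lambda(I)\le c$. $I_1,\dots,I_K$ are exactly the dual feasible bases with $x(I_k,b)\ge0$. (A1): $OPT(b)$ is non-empty and bounded. *)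

theory Defs
  imports "Jordan_Normal_Form.DL_Rank" "Jordan_Normal_Form.DL_Submatrix"
begin

text \<open>Linear programs  min c^T x  s.t.  A x = beta, x \<ge> 0, with A an m x d real matrix
  (JNF matrices, columns indexed 0..d-1).\<close>

definition col_submat :: "real mat \<Rightarrow> nat set \<Rightarrow> real mat" where
  "col_submat A I = submatrix A UNIV I"

definition minv :: "real mat \<Rightarrow> real mat" where
  "minv B = (SOME C. inverts_mat B C \<and> inverts_mat C B)"

definition is_basis :: "real mat \<Rightarrow> nat set \<Rightarrow> bool" where
  "is_basis A I \<longleftrightarrow> I \<subseteq> {..<dim_col A} \<and> card I = dim_row A \<and> invertible_mat (col_submat A I)"

text \<open>x(I,beta): (A_I)^{-1} beta on the coordinates I (in increasing order), 0 elsewhere.\<close>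
definition basic_sol :: "real mat \<Rightarrow> nat set \<Rightarrow> real vec \<Rightarrow> real vec" where
  "basic_sol A I \<beta> = vec (dim_col A)
     (\<lambda>j. if j \<in> I then (minv (col_submat A I) *\<^sub>v \<beta>) $ card {i \<in> I. i < j} else 0)"

definition restrict_vec :: "real vec \<Rightarrow> nat set \<Rightarrow> real vec" where
  "restrict_vec c I = vec (card I) (\<lambda>i. c $ pick I i)"

definition dual_mult :: "real mat \<Rightarrow> real vec \<Rightarrow> nat set \<Rightarrow> real vec" where
  "dual_mult A c I = transpose_mat (minv (col_submat A I)) *\<^sub>v restrict_vec c I"

definition dual_feasible :: "real mat \<Rightarrow> real vec \<Rightarrow> nat set \<Rightarrow> bool" where
  "dual_feasible A c I \<longleftrightarrow> transpose_mat A *\<^sub>v dual_mult A c I \<le> c"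

definition feas_set :: "real mat \<Rightarrow> real vec \<Rightarrow> real vec set" where
  "feas_set A \<beta> = {x. x \<in> carrier_vec (dim_col A) \<and> A *\<^sub>v x = \<beta> \<and> 0\<^sub>v (dim_col A) \<le> x}"

definition opt_set :: "real mat \<Rightarrow> real vec \<Rightarrow> real vec \<Rightarrow> real vec set" where
  "opt_set A c \<beta> = {x \<in> feas_set A \<beta>. \<forall>y \<in> feas_set A \<beta>. c \<bullet> x \<le> c \<bullet> y}"

definition vnorm :: "real vec \<Rightarrow> real" where
  "vnorm v = sqrt (\<Sum>i<dim_vec v. (v $ i)^2)"

definition vbounded :: "real vec set \<Rightarrow> bool" where
  "vbounded S \<longleftrightarrow> (\<exists>M. \<forall>x \<in> S. vnorm x \<le> M)"

text \<open>The set {I_1,...,I_K} of dual feasible bases I with x(I,b) \<ge> 0.\<close>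
definition opt_bases :: "real mat \<Rightarrow> real vec \<Rightarrow> real vec \<Rightarrow> nat set set" where
  "opt_bases A b c = {I. is_basis A I \<and> dual_feasible A c I \<and> 0\<^sub>v (dim_col A) \<le> basic_sol A I b}"

end

theory Submission
  imports Defs "Jordan_Normal_Form.Determinant" "HOL-Computational_Algebra.Polynomial"
begin


definition sp :: "nat \<Rightarrow> nat set \<Rightarrow> real vec \<Rightarrow> real vec" where
  "sp d I u = vec d (\<lambda>j. if j \<in> I then u $ card {i \<in> I. i < j} else 0)"

lemma card_less_in:
  fixes I :: "nat set"
  assumes "finite I" "j \<in> I" shows "card {i \<in> I. i < j} < card I"
proof -
  have "{i \<in> I. i < j} \<subset> I" using assms(2) by force
  thus ?thesis using assms by (intro psubset_card_mono) auto
qed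

lemma col_submat_carrier:
  assumes A: "A \<in> carrier_mat m d" and I: "I \<subseteq> {..<d}" "card I = m"
  shows "col_submat A I \<in> carrier_mat m m"
proof -
  have "{j. j < dim_col A \<and> j \<in> I} = I" using I A by auto
  moreover have "{i. i < dim_row A \<and> i \<in> (UNIV::nat set)} = {..<m}" using A by auto
  ultimately show ?thesis unfolding col_submat_def carrier_mat_def using I
    by (simp add: dim_submatrix)
qed

lemma col_submat_index:
  assumes A: "A \<in> carrier_mat m d" and I: "I \<subseteq> {..<d}" "card I = m"
    and i: "i < m" and k: "k < m"
  shows "col_submat A I $$ (i,k) = A $$ (i, pick I k)"
proof -
  have "{j. j < dim_col A \<and> j \<in> I} = I" using I A by auto
  moreover have "{i. i < dim_row A \<and> i \<in> (UNIV::nat set)} = {..<m}" using A by auto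
  ultimately show ?thesis unfolding col_submat_def using I i k
    by (subst submatrix_index) (auto simp: pick_UNIV)
qed

lemma sp_carrier[simp]: "sp d I u \<in> carrier_vec d" unfolding sp_def by auto

lemma col_submat_mult:
  assumes A: "A \<in> carrier_mat m d" and I: "I \<subseteq> {..<d}" "card I = m"
    and u: "u \<in> carrier_vec m"
  shows "col_submat A I *\<^sub>v u = A *\<^sub>v sp d I u"
proof (rule eq_vecI)
  have fI: "finite I" using I finite_subset by blast
  have B: "col_submat A I \<in> carrier_mat m m" by (rule col_submat_carrier[OF A I])
  show "dim_vec (col_submat A I *\<^sub>v u) = dim_vec (A *\<^sub>v sp d I u)" using A B by auto
  fix i assume "i < dim_vec (A *\<^sub>v sp d I u)"
  hence i: "i < m" using A by auto
  have "(col_submat A I *\<^sub>v u) $ i = (\<Sum>k<m. A $$ (i, pick I k) * u $ k)"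
    using B i u by (auto simp: scalar_prod_def col_submat_index[OF A I i] atLeast0LessThan)
  also have "\<dots> = (\<Sum>j\<in>I. A $$ (i, j) * u $ card {a \<in> I. a < j})"
  proof (rule sum.reindex_bij_witness[where i="\<lambda>j. card {a \<in> I. a < j}" and j="pick I"])
    fix k assume k: "k \<in> {..<m}"
    show "card {a \<in> I. a < pick I k} = k" using k I card_pick_le by auto
    show "pick I k \<in> I" using k I pick_in_set_le by auto
    show "A $$ (i, pick I k) * u $ card {a \<in> I. a < pick I k} = A $$ (i, pick I k) * u $ k"
      using k I card_pick_le by auto
  next
    fix j assume j: "j \<in> I"
    show "pick I (card {a \<in> I. a < j}) = j" using j pick_card_in_set by auto
    show "card {a \<in> I. a < j} \<in> {..<m}" using card_less_in[OF fI j] I by auto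
  qed
  also have "\<dots> = (\<Sum>j<d. A $$ (i, j) * (if j \<in> I then u $ card {a \<in> I. a < j} else 0))"
  proof -
    have "(\<Sum>j<d. A $$ (i, j) * (if j \<in> I then u $ card {a \<in> I. a < j} else 0))
       = (\<Sum>j\<in>{..<d} \<inter> I. A $$ (i, j) * u $ card {a \<in> I. a < j})"
      by (simp add: sum.inter_restrict[symmetric] if_distrib cong: if_cong)
    also have "{..<d} \<inter> I = I" using I by auto
    finally show ?thesis by simp
  qed
  also have "\<dots> = (A *\<^sub>v sp d I u) $ i"
    using A i by (auto simp: scalar_prod_def sp_def atLeast0LessThan row_def)
  finally show "(col_submat A I *\<^sub>v u) $ i = (A *\<^sub>v sp d I u) $ i" .
qed

lemma minv_props:
  assumes B: "B \<in> carrier_mat n n" and inv: "invertible_mat B"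
  shows "minv B \<in> carrier_mat n n" "B * minv B = 1\<^sub>m n" "minv B * B = 1\<^sub>m n"
proof -
  have ex: "\<exists>C. inverts_mat B C \<and> inverts_mat C B" using inv unfolding invertible_mat_def by blast
  hence h: "inverts_mat B (minv B) \<and> inverts_mat (minv B) B"
    unfolding minv_def by (rule someI_ex)
  hence 1: "B * minv B = 1\<^sub>m n" and 2: "minv B * B = 1\<^sub>m (dim_row (minv B))"
    using B unfolding inverts_mat_def by auto
  have "dim_col (minv B) = n" using arg_cong[OF 1, of dim_col] B by simp
  moreover have "dim_row (minv B) = n" using arg_cong[OF 2, of dim_col] B by simp
  ultimately show "minv B \<in> carrier_mat n n" by auto
  thus "B * minv B = 1\<^sub>m n" "minv B * B = 1\<^sub>m n" using 1 2 by auto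
qed

definition supp_on :: "nat \<Rightarrow> nat set \<Rightarrow> real vec \<Rightarrow> bool" where
  "supp_on d I x \<longleftrightarrow> x \<in> carrier_vec d \<and> (\<forall>j<d. j \<notin> I \<longrightarrow> x $ j = 0)"

lemma sp_supp: "supp_on d I (sp d I u)" unfolding supp_on_def sp_def by auto

lemma sp_restr:
  assumes I: "I \<subseteq> {..<d}" "card I = m" and x: "supp_on d I x"
  shows "x = sp d I (vec m (\<lambda>k. x $ pick I k))"
proof (rule eq_vecI)
  have fI: "finite I" using I finite_subset by blast
  show "dim_vec x = dim_vec (sp d I (vec m (\<lambda>k. x $ pick I k)))" using x unfolding supp_on_def sp_def by auto
  fix j assume "j < dim_vec (sp d I (vec m (\<lambda>k. x $ pick I k)))"
  hence j: "j < d" unfolding sp_def by auto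
  show "x $ j = sp d I (vec m (\<lambda>k. x $ pick I k)) $ j"
  proof (cases "j \<in> I")
    case True
    then show ?thesis using j card_less_in[OF fI True] I pick_card_in_set[OF True] unfolding sp_def by auto
  next
    case False
    then show ?thesis using j x unfolding sp_def supp_on_def by auto
  qed
qed

lemma sp_zero: assumes "finite I" "card I = m" shows "sp d I (0\<^sub>v m) = 0\<^sub>v d"
  unfolding sp_def using card_less_in[OF assms(1)] assms(2) by (intro eq_vecI) auto

lemma basis_carrier:
  assumes A: "A \<in> carrier_mat m d" and "is_basis A I"
  shows "I \<subseteq> {..<d}" "card I = m" "col_submat A I \<in> carrier_mat m m" "invertible_mat (col_submat A I)"
  using assms col_submat_carrier[OF A] unfolding is_basis_def by auto

lemma basis_indep:
  assumes A: "A \<in> carrier_mat m d" and bI: "is_basis A I"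
    and x: "supp_on d I x" and Ax: "A *\<^sub>v x = 0\<^sub>v m"
  shows "x = 0\<^sub>v d"
proof -
  note bc = basis_carrier[OF A bI]
  let ?B = "col_submat A I"
  let ?u = "vec m (\<lambda>k. x $ pick I k)"
  have xu: "x = sp d I ?u" by (rule sp_restr[OF bc(1,2) x])
  have "?B *\<^sub>v ?u = 0\<^sub>v m" using col_submat_mult[OF A bc(1,2), of ?u] xu Ax by auto
  hence "minv ?B *\<^sub>v (?B *\<^sub>v ?u) = 0\<^sub>v m" using minv_props[OF bc(3,4)] by auto
  hence "?u = 0\<^sub>v m" using minv_props[OF bc(3,4)] bc(3)
    by (subst (asm) assoc_mult_mat_vec[symmetric]) auto
  moreover have "finite I" using bc(1) finite_subset by blast
  ultimately show ?thesis using xu sp_zero bc(2) by metis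
qed

lemma indep_basis:
  assumes A: "A \<in> carrier_mat m d" and I: "I \<subseteq> {..<d}" "card I = m"
    and ind: "\<And>x. supp_on d I x \<Longrightarrow> A *\<^sub>v x = 0\<^sub>v m \<Longrightarrow> x = 0\<^sub>v d"
  shows "is_basis A I"
proof -
  let ?B = "col_submat A I"
  have B: "?B \<in> carrier_mat m m" by (rule col_submat_carrier[OF A I])
  have "det ?B \<noteq> 0"
  proof
    assume "det ?B = 0"
    then obtain u where u: "u \<in> carrier_vec m" "u \<noteq> 0\<^sub>v m" "?B *\<^sub>v u = 0\<^sub>v m"
      using det_0_iff_vec_prod_zero[OF B] by auto
    have "A *\<^sub>v sp d I u = 0\<^sub>v m" using u col_submat_mult[OF A I u(1)] by auto
    hence z: "sp d I u = 0\<^sub>v d" using ind sp_supp by blast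
    have "u = 0\<^sub>v m"
    proof (rule eq_vecI)
      fix k assume "k < dim_vec (0\<^sub>v m)"
      hence k: "k < m" by auto
      have "pick I k \<in> I" "card {a \<in> I. a < pick I k} = k" using k I pick_in_set_le card_pick_le by auto
      moreover have "pick I k < d" using \<open>pick I k \<in> I\<close> I by auto
      ultimately have "sp d I u $ pick I k = u $ k" unfolding sp_def by auto
      thus "u $ k = 0\<^sub>v m $ k" using z k \<open>pick I k < d\<close> by auto
    qed (use u in auto)
    thus False using u by auto
  qed
  hence "?B \<in> Units (ring_mat TYPE(real) m ())" using det_non_zero_imp_unit[OF B] by auto
  then obtain C where C: "C \<in> carrier_mat m m" "C * ?B = 1\<^sub>m m" "?B * C = 1\<^sub>m m"
    unfolding Units_def ring_mat_def by auto
  have "invertible_mat ?B" unfolding invertible_mat_def inverts_mat_def square_mat.simps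
    using B C by (intro conjI exI[of _ C]) auto
  thus ?thesis unfolding is_basis_def using I A by auto
qed

lemma basic_sol_sp: assumes A: "A \<in> carrier_mat m d"
  shows "basic_sol A I \<beta> = sp d I (minv (col_submat A I) *\<^sub>v \<beta>)"
  using A unfolding basic_sol_def sp_def by auto

lemma basic_sol_props:
  assumes A: "A \<in> carrier_mat m d" and bI: "is_basis A I" and \<beta>: "\<beta> \<in> carrier_vec m"
  shows "supp_on d I (basic_sol A I \<beta>)" "A *\<^sub>v basic_sol A I \<beta> = \<beta>"
proof -
  note bc = basis_carrier[OF A bI]
  note mp = minv_props[OF bc(3,4)]
  show "supp_on d I (basic_sol A I \<beta>)" unfolding basic_sol_sp[OF A] by (rule sp_supp)
  have "A *\<^sub>v basic_sol A I \<beta> = col_submat A I *\<^sub>v (minv (col_submat A I) *\<^sub>v \<beta>)"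
    unfolding basic_sol_sp[OF A] using col_submat_mult[OF A bc(1,2)] mp \<beta> by auto
  also have "\<dots> = \<beta>" using mp \<beta> bc(3) by (subst assoc_mult_mat_vec[symmetric]) auto
  finally show "A *\<^sub>v basic_sol A I \<beta> = \<beta>" .
qed

lemma supp_on_minus: "supp_on d I x \<Longrightarrow> supp_on d I y \<Longrightarrow> supp_on d I (x - y)"
  unfolding supp_on_def by auto

lemma basic_sol_unique:
  assumes A: "A \<in> carrier_mat m d" and bI: "is_basis A I" and \<beta>: "\<beta> \<in> carrier_vec m"
    and x: "supp_on d I x" and Ax: "A *\<^sub>v x = \<beta>"
  shows "x = basic_sol A I \<beta>"
proof -
  note bp = basic_sol_props[OF A bI \<beta>]
  have xc: "x \<in> carrier_vec d" and yc: "basic_sol A I \<beta> \<in> carrier_vec d" using x bp(1) unfolding supp_on_def by auto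
  have "A *\<^sub>v (x - basic_sol A I \<beta>) = 0\<^sub>v m"
    using mult_minus_distrib_mat_vec[OF A xc yc] Ax bp(2) \<beta> by auto
  hence z: "x - basic_sol A I \<beta> = 0\<^sub>v d" using basis_indep[OF A bI supp_on_minus[OF x bp(1)]] by auto
  show ?thesis
  proof (rule eq_vecI)
    fix i assume "i < dim_vec (basic_sol A I \<beta>)"
    hence i: "i < d" using yc by auto
    have "(x - basic_sol A I \<beta>) $ i = 0" using z i by simp
    thus "x $ i = basic_sol A I \<beta> $ i" using i yc by simp
  qed (use xc yc in auto)
qed

lemma col_submat_col:
  assumes A: "A \<in> carrier_mat m d" and I: "I \<subseteq> {..<d}" "card I = m" and k: "k < m"
  shows "col (col_submat A I) k = col A (pick I k)"
proof -
  have B: "col_submat A I \<in> carrier_mat m m" by (rule col_submat_carrier[OF A I])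
  have "pick I k \<in> I" using k I pick_in_set_le by auto
  hence "pick I k < d" using I by auto
  thus ?thesis using B A k col_submat_index[OF A I] by (intro eq_vecI) auto
qed

lemma dual_mult_props:
  assumes A: "A \<in> carrier_mat m d" and bI: "is_basis A I"
  shows "dual_mult A c I \<in> carrier_vec m" "\<And>i. i \<in> I \<Longrightarrow> col A i \<bullet> dual_mult A c I = c $ i"
proof -
  note bc = basis_carrier[OF A bI]
  note mp = minv_props[OF bc(3,4)]
  let ?B = "col_submat A I" let ?C = "minv ?B"
  have cI: "restrict_vec c I \<in> carrier_vec m" unfolding restrict_vec_def using bc by auto
  show lc: "dual_mult A c I \<in> carrier_vec m" unfolding dual_mult_def using mp cI by auto
  fix i assume i: "i \<in> I"
  have fI: "finite I" using bc(1) finite_subset by blast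
  let ?k = "card {a \<in> I. a < i}"
  have k: "?k < m" using card_less_in[OF fI i] bc by auto
  have pk: "pick I ?k = i" using pick_card_in_set[OF i] .
  have "col A i \<bullet> dual_mult A c I = (transpose_mat ?B *\<^sub>v dual_mult A c I) $ ?k"
    using k bc(3) col_submat_col[OF A bc(1,2) k] pk by auto
  also have "transpose_mat ?B *\<^sub>v dual_mult A c I = (transpose_mat ?B * transpose_mat ?C) *\<^sub>v restrict_vec c I"
    unfolding dual_mult_def using mp bc(3) cI by (subst assoc_mult_mat_vec) auto
  also have "transpose_mat ?B * transpose_mat ?C = transpose_mat (?C * ?B)"
    using transpose_mult[OF mp(1) bc(3)] by simp
  also have "\<dots> = 1\<^sub>m m" using mp by simp
  finally show "col A i \<bullet> dual_mult A c I = c $ i" using cI k pk unfolding restrict_vec_def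
    using bc by auto
qed

lemma dual_mult_unique:
  assumes A: "A \<in> carrier_mat m d" and bI: "is_basis A I" and mu: "\<mu> \<in> carrier_vec m"
    and eq: "\<And>i. i \<in> I \<Longrightarrow> col A i \<bullet> \<mu> = c $ i"
  shows "\<mu> = dual_mult A c I"
proof -
  note bc = basis_carrier[OF A bI]
  note mp = minv_props[OF bc(3,4)]
  let ?B = "col_submat A I" let ?C = "minv ?B"
  have cI: "restrict_vec c I \<in> carrier_vec m" unfolding restrict_vec_def using bc by auto
  have 1: "transpose_mat ?B *\<^sub>v \<mu> = restrict_vec c I"
  proof (rule eq_vecI)
    fix k assume "k < dim_vec (restrict_vec c I)"
    hence k: "k < m" using cI by auto
    have "pick I k \<in> I" using k bc pick_in_set_le by auto
    thus "(transpose_mat ?B *\<^sub>v \<mu>) $ k = restrict_vec c I $ k"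
      using k bc(3) col_submat_col[OF A bc(1,2) k] eq unfolding restrict_vec_def using bc by auto
  qed (use bc(3) cI in auto)
  have "dual_mult A c I = transpose_mat ?C *\<^sub>v (transpose_mat ?B *\<^sub>v \<mu>)"
    unfolding dual_mult_def 1 ..
  also have "\<dots> = (transpose_mat ?C * transpose_mat ?B) *\<^sub>v \<mu>"
    using mp bc(3) mu by (subst assoc_mult_mat_vec) auto
  also have "transpose_mat ?C * transpose_mat ?B = transpose_mat (?B * ?C)"
    using transpose_mult[OF bc(3) mp(1)] by simp
  also have "\<dots> = 1\<^sub>m m" using mp by simp
  finally show ?thesis using mu by auto
qed

lemma mult_scalar_sum:
  fixes A :: "real mat"
  assumes A: "A \<in> carrier_mat m d" and x: "x \<in> carrier_vec d" and y: "y \<in> carrier_vec m"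
  shows "(A *\<^sub>v x) \<bullet> y = (\<Sum>j<d. x $ j * (col A j \<bullet> y))"
proof -
  have "(A *\<^sub>v x) \<bullet> y = (\<Sum>i<m. (A *\<^sub>v x) $ i * y $ i)"
    using y by (simp add: scalar_prod_def atLeast0LessThan)
  also have "\<dots> = (\<Sum>i<m. (\<Sum>j<d. A $$ (i,j) * x $ j) * y $ i)"
  proof (rule sum.cong[OF refl])
    fix i assume "i \<in> {..<m}"
    hence i: "i < m" by simp
    have "(A *\<^sub>v x) $ i = row A i \<bullet> x" using A i by simp
    also have "\<dots> = (\<Sum>j<d. A $$ (i,j) * x $ j)"
      unfolding scalar_prod_def using A x i by (simp add: atLeast0LessThan)
    finally show "(A *\<^sub>v x) $ i * y $ i = (\<Sum>j<d. A $$ (i,j) * x $ j) * y $ i" by simp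
  qed
  also have "\<dots> = (\<Sum>i<m. \<Sum>j<d. x $ j * (A $$ (i,j) * y $ i))"
    by (simp add: sum_distrib_right, intro sum.cong refl, simp add: mult_ac)
  also have "\<dots> = (\<Sum>j<d. \<Sum>i<m. x $ j * (A $$ (i,j) * y $ i))" by (rule sum.swap)
  also have "\<dots> = (\<Sum>j<d. x $ j * (col A j \<bullet> y))"
  proof (rule sum.cong[OF refl])
    fix j assume "j \<in> {..<d}"
    hence j: "j < d" by simp
    have "col A j \<bullet> y = (\<Sum>i<m. A $$ (i,j) * y $ i)"
      unfolding scalar_prod_def using A y j by (simp add: atLeast0LessThan)
    thus "(\<Sum>i<m. x $ j * (A $$ (i,j) * y $ i)) = x $ j * (col A j \<bullet> y)"
      by (simp add: sum_distrib_left)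
  qed
  finally show ?thesis .
qed

lemma rho_lemma:
  assumes A: "A \<in> carrier_mat m d" and bI: "is_basis A I" and \<beta>: "\<beta> \<in> carrier_vec m" and k: "k \<in> I"
  shows "basic_sol A I \<beta> $ k = dual_mult A (unit_vec d k) I \<bullet> \<beta>"
proof -
  note bc = basis_carrier[OF A bI]
  note bp = basic_sol_props[OF A bI \<beta>]
  let ?x = "basic_sol A I \<beta>" let ?r = "dual_mult A (unit_vec d k) I"
  note dp = dual_mult_props[OF A bI, where c="unit_vec d k"]
  have xc: "?x \<in> carrier_vec d" using bp(1) unfolding supp_on_def by auto
  have kd: "k < d" using k bc by auto
  have "?r \<bullet> \<beta> = \<beta> \<bullet> ?r" using comm_scalar_prod[OF dp(1) \<beta>] .
  also have "\<dots> = (\<Sum>j<d. ?x $ j * (col A j \<bullet> ?r))" using mult_scalar_sum[OF A xc dp(1)] by (simp only: bp(2))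
  also have "\<dots> = (\<Sum>j<d. if j = k then ?x $ j else 0)"
  proof (rule sum.cong)
    fix j assume j: "j \<in> {..<d}"
    show "?x $ j * (col A j \<bullet> ?r) = (if j = k then ?x $ j else 0)"
    proof (cases "j \<in> I")
      case True thus ?thesis using dp(2)[OF True] j kd by auto
    next
      case False thus ?thesis using bp(1) j k unfolding supp_on_def by auto
    qed
  qed simp
  also have "\<dots> = ?x $ k" using kd by simp
  finally show ?thesis by (rule sym)
qed



lemma mat_vec_index_sum:
  assumes A: "A \<in> carrier_mat m d" and x: "x \<in> carrier_vec d" and i: "i < m"
  shows "(A *\<^sub>v x) $ i = (\<Sum>l<d. A $$ (i,l) * x $ l)"
proof -
  have "(A *\<^sub>v x) $ i = row A i \<bullet> x" using A i by simp
  also have "\<dots> = (\<Sum>l<d. A $$ (i,l) * x $ l)"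
    unfolding scalar_prod_def using A x i by (simp add: atLeast0LessThan)
  finally show ?thesis .
qed

lemma pivot_basis:
  assumes A: "A \<in> carrier_mat m d" and bI: "is_basis A I" and k: "k \<in> I"
    and j: "j < d" "j \<notin> I" and nz: "basic_sol A I (col A j) $ k \<noteq> 0"
  shows "is_basis A (insert j (I - {k}))"
proof -
  note bc = basis_carrier[OF A bI]
  have fI: "finite I" using bc(1) finite_subset by blast
  let ?I' = "insert j (I - {k})"
  have cj: "col A j \<in> carrier_vec m" using A by auto
  let ?z = "basic_sol A I (col A j)"
  note zp = basic_sol_props[OF A bI cj]
  have zc: "?z \<in> carrier_vec d" using zp(1) unfolding supp_on_def by auto
  show ?thesis
  proof (rule indep_basis[OF A])
    show "?I' \<subseteq> {..<d}" using bc j by auto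
    have "m > 0" using fI k bc card_gt_0_iff by auto
    thus "card ?I' = m" using fI k j bc by (simp add: card_Diff_singleton)
    fix y assume ys: "supp_on d ?I' y" and Ay: "A *\<^sub>v y = 0\<^sub>v m"
    have yc: "y \<in> carrier_vec d" using ys unfolding supp_on_def by auto
    define y' where "y' = vec d (\<lambda>l. (if l = j then 0 else y $ l) + y $ j * ?z $ l)"
    have y'c: "y' \<in> carrier_vec d" unfolding y'_def by auto
    have "supp_on d I y'"
      unfolding supp_on_def
    proof (intro conjI allI impI)
      show "y' \<in> carrier_vec d" by (rule y'c)
      fix l assume l: "l < d" "l \<notin> I"
      have "?z $ l = 0" using zp(1) l unfolding supp_on_def by blast
      moreover have "l \<noteq> j \<Longrightarrow> y $ l = 0" using ys l unfolding supp_on_def by blast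
      ultimately show "y' $ l = 0" unfolding y'_def using l by simp
    qed
    moreover have "A *\<^sub>v y' = 0\<^sub>v m"
    proof (rule eq_vecI)
      fix i assume "i < dim_vec (0\<^sub>v m)"
      hence i: "i < m" by auto
      have "(A *\<^sub>v y') $ i = (\<Sum>l<d. A $$ (i,l) * y' $ l)" by (rule mat_vec_index_sum[OF A y'c i])
      also have "\<dots> = (\<Sum>l<d. (A $$ (i,l) * y $ l - (if l = j then A $$ (i,l) * y $ l else 0))
          + y $ j * (A $$ (i,l) * ?z $ l))"
      proof (rule sum.cong[OF refl])
        fix l assume "l \<in> {..<d}"
        hence l: "l < d" by simp
        show "A $$ (i,l) * y' $ l = (A $$ (i,l) * y $ l - (if l = j then A $$ (i,l) * y $ l else 0))
          + y $ j * (A $$ (i,l) * ?z $ l)"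
          unfolding y'_def using l by (simp add: algebra_simps)
      qed
      also have "\<dots> = (\<Sum>l<d. A $$ (i,l) * y $ l) - (\<Sum>l<d. if l = j then A $$ (i,l) * y $ l else 0)
          + y $ j * (\<Sum>l<d. A $$ (i,l) * ?z $ l)"
        by (simp only: sum.distrib sum_subtractf sum_distrib_left)
      also have "(\<Sum>l<d. A $$ (i,l) * y $ l) = 0" using mat_vec_index_sum[OF A yc i] Ay i by simp
      also have "(\<Sum>l<d. A $$ (i,l) * ?z $ l) = A $$ (i,j)"
        using mat_vec_index_sum[OF A zc i] zp(2) i A j by simp
      also have "(\<Sum>l<d. if l = j then A $$ (i,l) * y $ l else 0) = A $$ (i,j) * y $ j"
        using j by simp
      finally show "(A *\<^sub>v y') $ i = 0\<^sub>v m $ i" using i by simp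
    qed (use A in auto)
    ultimately have y'0: "y' = 0\<^sub>v d" using basis_indep[OF A bI] by blast
    have kd: "k < d" using k bc by auto
    have "k \<noteq> j" using k j by auto
    hence "y $ k = 0" using ys kd unfolding supp_on_def by auto
    moreover have "y' $ k = 0" using y'0 kd by simp
    ultimately have "y $ j * ?z $ k = 0" unfolding y'_def using kd \<open>k \<noteq> j\<close> by simp
    hence yj: "y $ j = 0" using nz by simp
    show "y = 0\<^sub>v d"
    proof (rule eq_vecI)
      fix l assume "l < dim_vec (0\<^sub>v d)"
      hence l: "l < d" by simp
      have "y' $ l = 0" using y'0 l by simp
      thus "y $ l = 0\<^sub>v d $ l" unfolding y'_def using l yj by (auto split: if_splits)
    qed (use yc in auto)
  qed
qed

lemma df_iff:
  assumes A: "A \<in> carrier_mat m d" and bI: "is_basis A I" and cc: "cc \<in> carrier_vec d"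
  shows "dual_feasible A cc I \<longleftrightarrow> (\<forall>i<d. col A i \<bullet> dual_mult A cc I \<le> cc $ i)"
proof -
  have lc: "dual_mult A cc I \<in> carrier_vec m" using dual_mult_props(1)[OF A bI] .
  show ?thesis unfolding dual_feasible_def less_eq_vec_def using A cc lc by auto
qed

lemma sp_lin:
  fixes w :: "real vec"
  assumes "w \<in> carrier_vec n" "x \<in> carrier_vec n" "y \<in> carrier_vec n"
  shows "w \<bullet> (x + t \<cdot>\<^sub>v y) = w \<bullet> x + t * (w \<bullet> y)"
  using assms by (subst scalar_prod_add_distrib[of _ n]) auto

lemma core:
  assumes A: "A \<in> carrier_mat m d" and cc: "cc \<in> carrier_vec d" and b': "b' \<in> carrier_vec m"
    and fe: "feas_set A b' \<noteq> {}"
    and J: "is_basis A J" "S \<subseteq> J" "dual_feasible A cc J"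
    and nondeg: "\<And>I j. is_basis A I \<Longrightarrow> j < d \<Longrightarrow> j \<notin> I \<Longrightarrow> col A j \<bullet> dual_mult A cc I \<noteq> cc $ j"
  shows "\<exists>I. is_basis A I \<and> S \<subseteq> I \<and> dual_feasible A cc I \<and> (\<forall>k\<in>I - S. basic_sol A I b' $ k \<ge> 0)"
proof -
  define F where "F = {I. is_basis A I \<and> S \<subseteq> I \<and> dual_feasible A cc I}"
  have "F \<subseteq> Pow {..<d}" unfolding F_def using basis_carrier[OF A] by blast
  hence fF: "finite F" by (rule finite_subset) auto
  have JF: "J \<in> F" unfolding F_def using J by auto
  define f where "f I = b' \<bullet> dual_mult A cc I" for I
  obtain I where IF: "I \<in> F" and Imax: "\<And>I'. I' \<in> F \<Longrightarrow> f I' \<le> f I"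
  proof -
    have "Max (f ` F) \<in> f ` F" using fF JF by (intro Max_in) auto
    then obtain I where "I \<in> F" "f I = Max (f ` F)" by auto
    thus ?thesis using that fF by auto
  qed
  have bI: "is_basis A I" and SI: "S \<subseteq> I" and dfI: "dual_feasible A cc I" using IF unfolding F_def by auto
  note bc = basis_carrier[OF A bI]
  have "\<forall>k\<in>I - S. basic_sol A I b' $ k \<ge> 0"
  proof (rule ccontr)
    assume "\<not> ?thesis"
    then obtain k where k: "k \<in> I" "k \<notin> S" and neg: "basic_sol A I b' $ k < 0" by auto
    have kd: "k < d" using k bc by auto
    define lam where "lam = dual_mult A cc I"
    define rho where "rho = dual_mult A (unit_vec d k) I"
    have lc: "lam \<in> carrier_vec m" unfolding lam_def by (rule dual_mult_props(1)[OF A bI])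
    have rc: "rho \<in> carrier_vec m" unfolding rho_def by (rule dual_mult_props(1)[OF A bI])
    define al where "al j = col A j \<bullet> rho" for j
    define r where "r j = cc $ j - col A j \<bullet> lam" for j
    have rhoI: "al i = (if i = k then 1 else 0)" if i: "i \<in> I" for i
    proof -
      have "i < d" using i bc by auto
      moreover have "al i = unit_vec d k $ i" unfolding al_def rho_def by (rule dual_mult_props(2)[OF A bI i])
      ultimately show ?thesis using kd by simp
    qed
    have lamI: "col A i \<bullet> lam = cc $ i" if i: "i \<in> I" for i
      unfolding lam_def by (rule dual_mult_props(2)[OF A bI i])
    have rge: "r i \<ge> 0" if i: "i < d" for i
    proof -
      have "col A i \<bullet> lam \<le> cc $ i" using dfI[unfolded df_iff[OF A bI cc]] i unfolding lam_def by blast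
      thus ?thesis unfolding r_def by simp
    qed
    have xk: "basic_sol A I b' $ k = rho \<bullet> b'" unfolding rho_def by (rule rho_lemma[OF A bI b' k(1)])
    define N where "N = {j. j < d \<and> j \<notin> I \<and> al j < 0}"
    show False
    proof (cases "N = {}")
      case True
      obtain y where y: "y \<in> feas_set A b'" using fe by auto
      have yc: "y \<in> carrier_vec d" and Ay: "A *\<^sub>v y = b'" and yle: "0\<^sub>v d \<le> y"
        using y A unfolding feas_set_def by auto
      have y0: "y $ l \<ge> 0" if l: "l < d" for l
        using yle l yc unfolding less_eq_vec_def by auto
      have "rho \<bullet> b' = b' \<bullet> rho" using comm_scalar_prod[OF rc b'] .
      also have "\<dots> = (\<Sum>l<d. y $ l * al l)" unfolding al_def using mult_scalar_sum[OF A yc rc] by (simp only: Ay)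
      also have "\<dots> \<ge> 0"
      proof (rule sum_nonneg)
        fix l assume "l \<in> {..<d}"
        hence l: "l < d" by simp
        have "al l \<ge> 0"
        proof (cases "l \<in> I")
          case True thus ?thesis using rhoI by auto
        next
          case False thus ?thesis using True l unfolding N_def by auto
        qed
        thus "y $ l * al l \<ge> 0" using y0[OF l] by simp
      qed
      finally show False using xk neg by simp
    next
      case False
      have fN: "finite N" unfolding N_def by auto
      obtain j0 where j0N: "j0 \<in> N" and j0min: "\<And>j. j \<in> N \<Longrightarrow> r j0 / (- al j0) \<le> r j / (- al j)"
      proof -
        let ?g = "\<lambda>j. r j / (- al j)"
        have "Min (?g ` N) \<in> ?g ` N" using fN False by simp
        then obtain j0 where j0: "j0 \<in> N" "?g j0 = Min (?g ` N)" by auto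
        have "?g j0 \<le> ?g j" if jN: "j \<in> N" for j
        proof -
          have "Min (?g ` N) \<le> ?g j" using fN jN by (intro Min_le) auto
          thus ?thesis using j0(2) by simp
        qed
        thus ?thesis using that j0(1) by blast
      qed
      have j0: "j0 < d" "j0 \<notin> I" "al j0 < 0" using j0N unfolding N_def by auto
      have "r j0 \<noteq> 0" using nondeg[OF bI j0(1,2)] unfolding r_def lam_def by auto
      hence rpos: "r j0 > 0" using rge[OF j0(1)] by simp
      define th where "th = r j0 / (- al j0)"
      have thpos: "th > 0" unfolding th_def using rpos j0 by (simp add: divide_pos_neg)
      define mu where "mu = lam + (- th) \<cdot>\<^sub>v rho"
      have muc: "mu \<in> carrier_vec m" unfolding mu_def using lc rc by auto
      have mu_eq: "\<And>w. w \<in> carrier_vec m \<Longrightarrow> w \<bullet> mu = w \<bullet> lam - th * (w \<bullet> rho)"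
        unfolding mu_def using sp_lin lc rc by simp
      let ?I' = "insert j0 (I - {k})"
      have cj0: "col A j0 \<in> carrier_vec m" using A by auto
      have "basic_sol A I (col A j0) $ k = rho \<bullet> col A j0"
        unfolding rho_def by (rule rho_lemma[OF A bI cj0 k(1)])
      also have "\<dots> = al j0" unfolding al_def by (rule comm_scalar_prod[OF rc cj0])
      finally have alj0: "basic_sol A I (col A j0) $ k = al j0" .
      have bI': "is_basis A ?I'" using pivot_basis[OF A bI k(1) j0(1,2)] alj0 j0(3) by simp
      have mu_dm: "mu = dual_mult A cc ?I'"
      proof (rule dual_mult_unique[OF A bI' muc])
        fix i assume i: "i \<in> ?I'"
        have ci: "col A i \<in> carrier_vec m" using A by auto
        show "col A i \<bullet> mu = cc $ i"
        proof (cases "i = j0")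
          case True
          have "col A i \<bullet> mu = col A j0 \<bullet> lam - th * al j0" using mu_eq[OF ci] True al_def by simp
          also have "th * al j0 = - r j0" unfolding th_def using j0(3) by (simp add: field_simps)
          finally show ?thesis using True r_def by simp
        next
          case False
          hence "i \<in> I" "i \<noteq> k" using i by auto
          thus ?thesis using mu_eq[OF ci] lamI rhoI al_def by auto
        qed
      qed
      have dfI': "dual_feasible A cc ?I'"
        unfolding df_iff[OF A bI' cc] mu_dm[symmetric]
      proof (intro allI impI)
        fix i assume i: "i < d"
        have ci: "col A i \<in> carrier_vec m" using A by auto
        have e: "col A i \<bullet> mu = col A i \<bullet> lam - th * al i" using mu_eq[OF ci] al_def by simp
        show "col A i \<bullet> mu \<le> cc $ i"
        proof (cases "al i \<ge> 0")
          case True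
          thus ?thesis using e rge[OF i] thpos unfolding r_def
            by (smt (verit) mult_nonneg_nonneg)
        next
          case False
          have "i \<notin> I"
          proof
            assume "i \<in> I"
            hence "al i = (if i = k then 1 else 0)" by (rule rhoI)
            hence "al i \<ge> 0" by simp
            thus False using False by simp
          qed
          hence iN: "i \<in> N" using False i unfolding N_def by auto
          have "th \<le> r i / (- al i)" using j0min[OF iN] unfolding th_def .
          hence "th * (- al i) \<le> r i" using False by (simp add: field_simps)
          thus ?thesis using e unfolding r_def by simp
        qed
      qed
      have "?I' \<in> F" unfolding F_def using bI' dfI' SI k by auto
      hence "f ?I' \<le> f I" by (rule Imax)
      moreover have "f ?I' = f I - th * (b' \<bullet> rho)"
        unfolding f_def mu_dm[symmetric] lam_def[symmetric]
        using comm_scalar_prod[OF b' muc] comm_scalar_prod[OF b' lc] mu_eq[OF b'] by simp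
      moreover have "b' \<bullet> rho < 0" using xk neg comm_scalar_prod[OF rc b'] by simp
      ultimately show False using thpos by (smt (verit) mult_pos_neg)
    qed
  qed
  thus ?thesis using bI SI dfI by auto
qed



lemma generic_p:
  fixes W :: "(nat \<Rightarrow> real) set" and J :: "nat set"
  assumes fin: "finite W" and nz: "\<And>w. w \<in> W \<Longrightarrow> \<exists>l<d. l \<notin> J \<and> w l \<noteq> 0"
  shows "\<exists>s>0. \<forall>w\<in>W. (\<Sum>l<d. w l * (if l \<in> J then 0 else s ^ l)) \<noteq> 0"
proof -
  define q :: "(nat \<Rightarrow> real) \<Rightarrow> real poly" where "q w = (\<Sum>l<d. monom (if l \<in> J then 0 else w l) l)" for w
  have pq: "poly (q w) x = (\<Sum>l<d. w l * (if l \<in> J then 0 else x ^ l))" for w x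
    unfolding q_def poly_sum poly_monom by (intro sum.cong) auto
  have qnz: "q w \<noteq> 0" if w: "w \<in> W" for w
  proof -
    obtain l0 where l0: "l0 < d" "l0 \<notin> J" "w l0 \<noteq> 0" using nz[OF w] by auto
    have "coeff (q w) l0 = (\<Sum>l<d. if l = l0 then (if l \<in> J then 0 else w l) else 0)"
      unfolding q_def coeff_sum coeff_monom by (intro sum.cong) auto
    also have "\<dots> = w l0" using l0 by simp
    finally show ?thesis using l0 by auto
  qed
  define R where "R = (\<Union>w\<in>W. {x. poly (q w) x = 0})"
  have fR: "finite R" unfolding R_def using fin qnz poly_roots_finite by blast
  define s where "s = Max (insert 0 R) + 1"
  have s0: "s > 0" unfolding s_def using fR by (smt (verit) Max_ge finite_insert insertI1)
  have sR: "s \<notin> R"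
  proof
    assume "s \<in> R"
    hence "s \<le> Max (insert 0 R)" using fR by (intro Max_ge) auto
    thus False unfolding s_def by simp
  qed
  show ?thesis
  proof (intro exI[of _ s] conjI ballI)
    show "s > 0" by (rule s0)
    fix w assume "w \<in> W"
    hence "poly (q w) s \<noteq> 0" using sR unfolding R_def by auto
    thus "(\<Sum>l<d. w l * (if l \<in> J then 0 else s ^ l)) \<noteq> 0" using pq by simp
  qed
qed

lemma abs_le_vnorm:
  assumes "l < dim_vec v" shows "\<bar>v $ l\<bar> \<le> vnorm v"
proof -
  have "(v $ l)^2 \<le> (\<Sum>i<dim_vec v. (v $ i)^2)"
    using assms by (intro member_le_sum) auto
  hence "sqrt ((v $ l)^2) \<le> vnorm v" unfolding vnorm_def by (rule real_sqrt_le_mono)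
  thus ?thesis by simp
qed

lemma vnorm_nonneg: "vnorm v \<ge> 0" unfolding vnorm_def by (intro real_sqrt_ge_zero sum_nonneg) auto

lemma abs_sp_le:
  assumes r: "\<rho> \<in> carrier_vec m" and dl: "\<delta> \<in> carrier_vec m"
  shows "\<bar>\<rho> \<bullet> \<delta>\<bar> \<le> (\<Sum>l<m. \<bar>\<rho> $ l\<bar>) * vnorm \<delta>"
proof -
  have "\<rho> \<bullet> \<delta> = (\<Sum>l<m. \<rho> $ l * \<delta> $ l)" unfolding scalar_prod_def using dl by (simp add: atLeast0LessThan)
  hence "\<bar>\<rho> \<bullet> \<delta>\<bar> \<le> (\<Sum>l<m. \<bar>\<rho> $ l * \<delta> $ l\<bar>)" by (simp add: sum_abs)
  also have "\<dots> \<le> (\<Sum>l<m. \<bar>\<rho> $ l\<bar> * vnorm \<delta>)"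
  proof (rule sum_mono)
    fix l assume "l \<in> {..<m}"
    hence "\<bar>\<delta> $ l\<bar> \<le> vnorm \<delta>" using dl abs_le_vnorm by auto
    thus "\<bar>\<rho> $ l * \<delta> $ l\<bar> \<le> \<bar>\<rho> $ l\<bar> * vnorm \<delta>" by (simp add: abs_mult mult_left_mono)
  qed
  also have "\<dots> = (\<Sum>l<m. \<bar>\<rho> $ l\<bar>) * vnorm \<delta>" by (simp add: sum_distrib_right)
  finally show ?thesis .
qed

lemma weak_dual:
  assumes A: "A \<in> carrier_mat m d" and bI: "is_basis A I" and c: "c \<in> carrier_vec d"
    and df: "dual_feasible A c I"
    and x: "supp_on d I x" and Ax: "A *\<^sub>v x = \<beta>"
    and y: "y \<in> carrier_vec d" and Ay: "A *\<^sub>v y = \<beta>" and y0: "\<And>l. l < d \<Longrightarrow> y $ l \<ge> 0"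
  shows "c \<bullet> x \<le> c \<bullet> y"
proof -
  define lam where "lam = dual_mult A c I"
  have lc: "lam \<in> carrier_vec m" unfolding lam_def by (rule dual_mult_props(1)[OF A bI])
  have xc: "x \<in> carrier_vec d" using x unfolding supp_on_def by auto
  have le: "col A l \<bullet> lam \<le> c $ l" if "l < d" for l
    using df[unfolded df_iff[OF A bI c]] that unfolding lam_def by blast
  have eqI: "col A l \<bullet> lam = c $ l" if "l \<in> I" for l
    unfolding lam_def by (rule dual_mult_props(2)[OF A bI that])
  have "c \<bullet> x = (\<Sum>l<d. x $ l * c $ l)" unfolding scalar_prod_def using xc
    by (simp add: atLeast0LessThan mult.commute)
  also have "\<dots> = (\<Sum>l<d. x $ l * (col A l \<bullet> lam))"
  proof (rule sum.cong[OF refl])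
    fix l assume "l \<in> {..<d}"
    thus "x $ l * c $ l = x $ l * (col A l \<bullet> lam)"
      using x eqI unfolding supp_on_def by (cases "l \<in> I") auto
  qed
  also have "\<dots> = (A *\<^sub>v x) \<bullet> lam" using mult_scalar_sum[OF A xc lc] by simp
  also have "\<dots> = (A *\<^sub>v y) \<bullet> lam" by (simp only: Ax Ay)
  also have "\<dots> = (\<Sum>l<d. y $ l * (col A l \<bullet> lam))" by (rule mult_scalar_sum[OF A y lc])
  also have "\<dots> \<le> (\<Sum>l<d. y $ l * c $ l)"
    by (intro sum_mono mult_left_mono le y0) auto
  also have "\<dots> = c \<bullet> y" unfolding scalar_prod_def using y
    by (simp add: atLeast0LessThan mult.commute)
  finally show ?thesis .
qed



theorem lemma4p2:
  fixes m d :: nat and A :: "real mat" and b c :: "real vec"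
  assumes A: "A \<in> carrier_mat m d" and md: "m \<le> d"
    and rk: "vec_space.rank m A = m"
    and b: "b \<in> carrier_vec m" and c: "c \<in> carrier_vec d"
    and A1: "opt_set A c b \<noteq> {}" "vbounded (opt_set A c b)"
    and b0: "b \<noteq> 0\<^sub>v m"
  shows "\<exists>\<epsilon>>0. \<forall>b' \<in> carrier_vec m. feas_set A b' \<noteq> {} \<longrightarrow> vnorm (b' - b) < \<epsilon> \<longrightarrow>
           (\<forall>J \<in> opt_bases A b c.
              \<exists>I \<in> {I \<in> opt_bases A b c. basic_sol A I b = basic_sol A J b}.
                basic_sol A I b' \<in> opt_set A c b')"
proof -
  define Bs where "Bs = {I. is_basis A I}"
  have "Bs \<subseteq> Pow {..<d}" unfolding Bs_def using basis_carrier[OF A] by blast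
  hence fBs: "finite Bs" by (rule finite_subset) auto
  define rh where "rh I k = dual_mult A (unit_vec d k) I" for I k
  define PK where "PK = {(I,k). I \<in> Bs \<and> k \<in> I}"
  have fPK: "finite PK"
  proof (rule finite_subset)
    show "PK \<subseteq> Bs \<times> {..<d}" unfolding PK_def Bs_def using basis_carrier[OF A] by auto
  qed (use fBs in auto)
  define C where "C = Max (insert 0 ((\<lambda>(I,k). \<Sum>l<m. \<bar>rh I k $ l\<bar>) ` PK))"
  have C0: "C \<ge> 0" unfolding C_def using fPK by (intro Max_ge) auto
  have Cge: "(\<Sum>l<m. \<bar>rh I k $ l\<bar>) \<le> C" if "I \<in> Bs" "k \<in> I" for I k
    unfolding C_def using fPK that by (intro Max_ge) (auto simp: PK_def)
  define PP where "PP = {(I,k). I \<in> Bs \<and> k < d \<and> basic_sol A I b $ k > 0}"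
  have "PP \<subseteq> Bs \<times> {..<d}" unfolding PP_def by auto
  hence fPP: "finite PP" by (rule finite_subset) (use fBs in auto)
  define eta where "eta = Min (insert 1 ((\<lambda>(I,k). basic_sol A I b $ k) ` PP))"
  have eta0: "eta > 0" unfolding eta_def using fPP by (subst Min_gr_iff) (auto simp: PP_def)
  have eta_le: "eta \<le> basic_sol A I b $ k" if "I \<in> Bs" "k < d" "basic_sol A I b $ k > 0" for I k
    unfolding eta_def using fPP that by (intro Min_le) (auto simp: PP_def)
  define eps where "eps = eta / (C + 1)"
  have eps0: "eps > 0" unfolding eps_def using eta0 C0 by simp
  show ?thesis
  proof (intro exI[of _ eps] conjI ballI impI)
    show "eps > 0" by (rule eps0)
    fix b' J
    assume b': "b' \<in> carrier_vec m" and fe: "feas_set A b' \<noteq> {}" and close: "vnorm (b' - b) < eps"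
      and JO: "J \<in> opt_bases A b c"
    have bJ: "is_basis A J" and dfJ: "dual_feasible A c J" and vJ0: "0\<^sub>v d \<le> basic_sol A J b"
      using JO A unfolding opt_bases_def by auto
    define v where "v = basic_sol A J b"
    note vp = basic_sol_props[OF A bJ b]
    have vc: "v \<in> carrier_vec d" using vp(1) unfolding v_def supp_on_def by auto
    have v0: "v $ l \<ge> 0" if "l < d" for l using vJ0 that vc unfolding v_def less_eq_vec_def by auto
    define S where "S = {i. i < d \<and> v $ i \<noteq> 0}"
    have SJ: "S \<subseteq> J" using vp(1) unfolding S_def v_def supp_on_def by auto
    define Pairs where "Pairs = {(I,j). I \<in> Bs \<and> j < d \<and> j \<notin> I}"
    have "Pairs \<subseteq> Bs \<times> {..<d}" unfolding Pairs_def by auto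
    hence fPairs: "finite Pairs" by (rule finite_subset) (use fBs in auto)
    define zz where "zz I j = basic_sol A I (col A j)" for I j
    define ww where "ww I j = (\<lambda>l. (if l = j then 1 else 0) - zz I j $ l)" for I j
    have ww_nz: "\<exists>l<d. l \<notin> J \<and> ww I j l \<noteq> 0" if IjP: "(I,j) \<in> Pairs" for I j
    proof (rule ccontr)
      assume con: "\<not> ?thesis"
      have bI: "is_basis A I" and j: "j < d" "j \<notin> I" using IjP unfolding Pairs_def Bs_def by auto
      have cj: "col A j \<in> carrier_vec m" using A by auto
      note zp = basic_sol_props[OF A bI cj]
      have zc: "zz I j \<in> carrier_vec d" using zp(1) unfolding zz_def supp_on_def by auto
      define wv where "wv = vec d (ww I j)"
      have wvc: "wv \<in> carrier_vec d" unfolding wv_def by auto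
      have "supp_on d J wv" unfolding supp_on_def wv_def using con by auto
      moreover have "A *\<^sub>v wv = 0\<^sub>v m"
      proof (rule eq_vecI)
        fix i assume "i < dim_vec (0\<^sub>v m)"
        hence i: "i < m" by simp
        have "(A *\<^sub>v wv) $ i = (\<Sum>l<d. A $$ (i,l) * wv $ l)" by (rule mat_vec_index_sum[OF A wvc i])
        also have "\<dots> = (\<Sum>l<d. A $$ (i,l) * ((if l = j then 1 else 0) - zz I j $ l))"
          unfolding wv_def ww_def by (intro sum.cong) auto
        also have "\<dots> = (\<Sum>l<d. (if l = j then A $$ (i,l) else 0) - A $$ (i,l) * zz I j $ l)"
          by (intro sum.cong) (auto simp: algebra_simps)
        also have "\<dots> = (\<Sum>l<d. if l = j then A $$ (i,l) else 0) - (\<Sum>l<d. A $$ (i,l) * zz I j $ l)"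
          by (rule sum_subtractf)
        also have "(\<Sum>l<d. A $$ (i,l) * zz I j $ l) = A $$ (i,j)"
        proof -
          have "(\<Sum>l<d. A $$ (i,l) * zz I j $ l) = (A *\<^sub>v zz I j) $ i"
            by (rule mat_vec_index_sum[OF A zc i, symmetric])
          also have "\<dots> = col A j $ i" unfolding zz_def by (simp only: zp(2))
          also have "\<dots> = A $$ (i,j)" using A i j by simp
          finally show ?thesis .
        qed
        finally show "(A *\<^sub>v wv) $ i = 0\<^sub>v m $ i" using j i by simp
      qed (use A in auto)
      ultimately have "wv = 0\<^sub>v d" using basis_indep[OF A bJ] by blast
      hence "wv $ j = 0" using j by simp
      moreover have "zz I j $ j = 0" using zp(1) j unfolding zz_def supp_on_def by auto
      ultimately show False unfolding wv_def ww_def using j by simp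
    qed
    obtain s where s0: "s > 0" and sgen: "\<And>w. w \<in> (\<lambda>(I,j). ww I j) ` Pairs \<Longrightarrow>
        (\<Sum>l<d. w l * (if l \<in> J then 0 else s ^ l)) \<noteq> 0"
    proof -
      have "finite ((\<lambda>(I,j). ww I j) ` Pairs)" using fPairs by simp
      moreover have "\<exists>l<d. l \<notin> J \<and> w l \<noteq> 0" if "w \<in> (\<lambda>(I,j). ww I j) ` Pairs" for w
        using that ww_nz by auto
      ultimately obtain s where "s > 0" "\<forall>w\<in>(\<lambda>(I,j). ww I j) ` Pairs.
          (\<Sum>l<d. w l * (if l \<in> J then 0 else s ^ l)) \<noteq> 0"
        using generic_p[of "(\<lambda>(I,j). ww I j) ` Pairs" d J] by blast
      thus ?thesis using that by blast
    qed
    define p where "p = vec d (\<lambda>l. if l \<in> J then 0 else s ^ l)"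
    have pc: "p \<in> carrier_vec d" unfolding p_def by auto
    have p0: "p $ l \<ge> 0" if "l < d" for l unfolding p_def using that s0 by auto
    define g where "g I j = p $ j - col A j \<bullet> dual_mult A p I" for I j
    define r0 where "r0 I j = c $ j - col A j \<bullet> dual_mult A c I" for I j
    have g_nz: "g I j \<noteq> 0" if IjP: "(I,j) \<in> Pairs" for I j
    proof -
      have bI: "is_basis A I" and j: "j < d" "j \<notin> I" using IjP unfolding Pairs_def Bs_def by auto
      have cj: "col A j \<in> carrier_vec m" using A by auto
      note zp = basic_sol_props[OF A bI cj]
      have zc: "zz I j \<in> carrier_vec d" using zp(1) unfolding zz_def supp_on_def by auto
      have lp: "dual_mult A p I \<in> carrier_vec m" by (rule dual_mult_props(1)[OF A bI])
      have "col A j \<bullet> dual_mult A p I = (A *\<^sub>v zz I j) \<bullet> dual_mult A p I" unfolding zz_def zp(2) by (rule refl)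
      also have "\<dots> = (\<Sum>l<d. zz I j $ l * (col A l \<bullet> dual_mult A p I))" by (rule mult_scalar_sum[OF A zc lp])
      also have "\<dots> = (\<Sum>l<d. zz I j $ l * p $ l)"
      proof (rule sum.cong[OF refl])
        fix l assume "l \<in> {..<d}"
        thus "zz I j $ l * (col A l \<bullet> dual_mult A p I) = zz I j $ l * p $ l"
          using zp(1) dual_mult_props(2)[OF A bI] unfolding zz_def supp_on_def by (cases "l \<in> I") auto
      qed
      finally have "g I j = p $ j - (\<Sum>l<d. zz I j $ l * p $ l)" unfolding g_def by simp
      also have "\<dots> = (\<Sum>l<d. (if l = j then p $ l else 0)) - (\<Sum>l<d. zz I j $ l * p $ l)"
        using j by simp
      also have "\<dots> = (\<Sum>l<d. (if l = j then p $ l else 0) - zz I j $ l * p $ l)"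
        by (rule sum_subtractf[symmetric])
      also have "\<dots> = (\<Sum>l<d. ww I j l * p $ l)"
        unfolding ww_def by (intro sum.cong) (auto simp: algebra_simps)
      also have "\<dots> = (\<Sum>l<d. ww I j l * (if l \<in> J then 0 else s ^ l))"
        unfolding p_def by (intro sum.cong) auto
      finally show ?thesis using sgen[of "ww I j"] IjP by auto
    qed
    define Q where "Q = {(I,j). (I,j) \<in> Pairs \<and> r0 I j \<noteq> 0}"
    have fQ: "finite Q" using fPairs unfolding Q_def by (rule rev_finite_subset) auto
    define M where "M = Min (insert 1 ((\<lambda>(I,j). \<bar>r0 I j\<bar> / (\<bar>g I j\<bar> + 1)) ` Q))"
    have M0: "M > 0" unfolding M_def using fQ by (subst Min_gr_iff) (auto simp: Q_def)
    define t where "t = M / 2"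
    have t0: "t > 0" unfolding t_def using M0 by simp
    have tb: "t * \<bar>g I j\<bar> < \<bar>r0 I j\<bar>" if "(I,j) \<in> Pairs" "r0 I j \<noteq> 0" for I j
    proof -
      have "M \<le> \<bar>r0 I j\<bar> / (\<bar>g I j\<bar> + 1)" unfolding M_def using fQ that by (intro Min_le) (auto simp: Q_def)
      hence "M * (\<bar>g I j\<bar> + 1) \<le> \<bar>r0 I j\<bar>" by (simp add: field_simps)
      moreover have "t * \<bar>g I j\<bar> < M * (\<bar>g I j\<bar> + 1)"
      proof -
        have "t * \<bar>g I j\<bar> \<le> M * \<bar>g I j\<bar>" unfolding t_def using M0 by (intro mult_right_mono) auto
        thus ?thesis using M0 by (simp add: algebra_simps)
      qed
      ultimately show ?thesis by simp
    qed
    define cc where "cc = c + t \<cdot>\<^sub>v p"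
    have ccc: "cc \<in> carrier_vec d" unfolding cc_def using c pc by auto
    have cci: "cc $ i = c $ i + t * p $ i" if "i < d" for i unfolding cc_def using c pc that by simp
    have lin: "dual_mult A cc I = dual_mult A c I + t \<cdot>\<^sub>v dual_mult A p I" if bI: "is_basis A I" for I
    proof -
      have l1: "dual_mult A c I \<in> carrier_vec m" and l2: "dual_mult A p I \<in> carrier_vec m"
        using dual_mult_props(1)[OF A bI] by auto
      show ?thesis
      proof (rule dual_mult_unique[OF A bI, symmetric])
        show "dual_mult A c I + t \<cdot>\<^sub>v dual_mult A p I \<in> carrier_vec m" using l1 l2 by auto
        fix i assume i: "i \<in> I"
        have id: "i < d" using i basis_carrier[OF A bI] by auto
        have ci: "col A i \<in> carrier_vec m" using A by auto
        have "col A i \<bullet> (dual_mult A c I + t \<cdot>\<^sub>v dual_mult A p I)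
            = col A i \<bullet> dual_mult A c I + t * (col A i \<bullet> dual_mult A p I)" by (rule sp_lin[OF ci l1 l2])
        also have "\<dots> = c $ i + t * p $ i"
          using dual_mult_props(2)[OF A bI i, where c=c] dual_mult_props(2)[OF A bI i, where c=p] by (simp only:)
        also have "\<dots> = cc $ i" using cci[OF id] by simp
        finally show "col A i \<bullet> (dual_mult A c I + t \<cdot>\<^sub>v dual_mult A p I) = cc $ i" .
      qed
    qed
    have rc: "cc $ j - col A j \<bullet> dual_mult A cc I = r0 I j + t * g I j" if bI: "is_basis A I" and j: "j < d" for I j
    proof -
      have l1: "dual_mult A c I \<in> carrier_vec m" and l2: "dual_mult A p I \<in> carrier_vec m"
        using dual_mult_props(1)[OF A bI] by auto
      have cj: "col A j \<in> carrier_vec m" using A by auto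
      show ?thesis unfolding lin[OF bI] sp_lin[OF cj l1 l2] cci[OF j] r0_def g_def by (simp add: algebra_simps)
    qed
    have nondeg: "col A j \<bullet> dual_mult A cc I \<noteq> cc $ j" if bI: "is_basis A I" and j: "j < d" "j \<notin> I" for I j
    proof -
      have IjP: "(I,j) \<in> Pairs" unfolding Pairs_def Bs_def using bI j by auto
      have "r0 I j + t * g I j \<noteq> 0"
      proof (cases "r0 I j = 0")
        case True thus ?thesis using t0 g_nz[OF IjP] by simp
      next
        case False
        have lt: "\<bar>t * g I j\<bar> < \<bar>r0 I j\<bar>" using tb[OF IjP False] t0 by (simp add: abs_mult)
        show ?thesis
        proof
          assume "r0 I j + t * g I j = 0"
          hence "t * g I j = - r0 I j" by simp
          hence "\<bar>t * g I j\<bar> = \<bar>r0 I j\<bar>" by simp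
          thus False using lt by simp
        qed
      qed
      thus ?thesis using rc[OF bI j(1)] by simp
    qed
    have dfJc: "dual_feasible A cc J"
      unfolding df_iff[OF A bJ ccc]
    proof (intro allI impI)
      fix i assume i: "i < d"
      show "col A i \<bullet> dual_mult A cc J \<le> cc $ i"
      proof (cases "i \<in> J")
        case True thus ?thesis using dual_mult_props(2)[OF A bJ True] by simp
      next
        case False
        have "0\<^sub>v m = dual_mult A p J"
        proof (rule dual_mult_unique[OF A bJ])
          fix l assume l: "l \<in> J"
          hence "l < d" using basis_carrier[OF A bJ] by auto
          thus "col A l \<bullet> 0\<^sub>v m = p $ l" unfolding p_def using l A by simp
        qed auto
        hence z: "dual_mult A p J = 0\<^sub>v m" by (rule sym)
        have "col A i \<bullet> 0\<^sub>v m = 0" unfolding scalar_prod_def by simp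
        hence "g J i = p $ i" unfolding g_def z by simp
        hence "g J i \<ge> 0" using p0[OF i] by simp
        moreover have "r0 J i \<ge> 0" using dfJ[unfolded df_iff[OF A bJ c]] i unfolding r0_def by auto
        moreover have "t * g J i \<ge> 0" using t0 \<open>g J i \<ge> 0\<close> by simp
        ultimately have "cc $ i - col A i \<bullet> dual_mult A cc J \<ge> 0" using rc[OF bJ i] by linarith
        thus ?thesis by simp
      qed
    qed
    obtain I where bI: "is_basis A I" and SI: "S \<subseteq> I" and dfIc: "dual_feasible A cc I"
      and pos: "\<And>k. k \<in> I - S \<Longrightarrow> basic_sol A I b' $ k \<ge> 0"
      using core[OF A ccc b' fe bJ SJ dfJc nondeg] by blast
    have Id: "I \<subseteq> {..<d}" using basis_carrier[OF A bI] by auto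
    have dfI: "dual_feasible A c I"
      unfolding df_iff[OF A bI c]
    proof (intro allI impI)
      fix i assume i: "i < d"
      show "col A i \<bullet> dual_mult A c I \<le> c $ i"
      proof (cases "i \<in> I")
        case True thus ?thesis using dual_mult_props(2)[OF A bI True] by simp
      next
        case False
        have IjP: "(I,i) \<in> Pairs" unfolding Pairs_def Bs_def using bI i False by auto
        have "col A i \<bullet> dual_mult A cc I \<le> cc $ i" using dfIc[unfolded df_iff[OF A bI ccc]] i by blast
        hence rcp: "r0 I i + t * g I i \<ge> 0" using rc[OF bI i] by simp
        have "r0 I i \<ge> 0"
        proof (rule ccontr)
          assume "\<not> r0 I i \<ge> 0"
          hence "r0 I i < 0" by simp
          moreover have "t * \<bar>g I i\<bar> < \<bar>r0 I i\<bar>" using tb[OF IjP] \<open>r0 I i < 0\<close> by simp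
          moreover have "t * g I i \<le> t * \<bar>g I i\<bar>" using t0 by (intro mult_left_mono) auto
          ultimately show False using rcp by linarith
        qed
        thus ?thesis unfolding r0_def by simp
      qed
    qed
    have vI: "supp_on d I v" unfolding supp_on_def using vc SI S_def by auto
    have Av: "A *\<^sub>v v = b" unfolding v_def by (rule vp(2))
    have vIeq: "v = basic_sol A I b" by (rule basic_sol_unique[OF A bI b vI Av])
    have IO: "I \<in> opt_bases A b c" unfolding opt_bases_def using bI dfI vJ0 vIeq v_def A by auto
    define x where "x = basic_sol A I b'"
    note xp = basic_sol_props[OF A bI b']
    have xc: "x \<in> carrier_vec d" using xp(1) unfolding x_def supp_on_def by auto
    have xnn: "x $ l \<ge> 0" if l: "l < d" for l
    proof (cases "l \<in> I")
      case False thus ?thesis using xp(1) l unfolding x_def supp_on_def by auto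
    next
      case True
      show ?thesis
      proof (cases "l \<in> S")
        case False thus ?thesis using pos True unfolding x_def by auto
      next
        case lS: True
        have rc': "rh I l \<in> carrier_vec m" unfolding rh_def by (rule dual_mult_props(1)[OF A bI])
        have xl: "x $ l = rh I l \<bullet> b'" unfolding x_def rh_def by (rule rho_lemma[OF A bI b' True])
        have vl: "v $ l = rh I l \<bullet> b" unfolding vIeq rh_def by (rule rho_lemma[OF A bI b True])
        have dc: "b' - b \<in> carrier_vec m" using b b' by auto
        have "x $ l - v $ l = rh I l \<bullet> (b' - b)"
          unfolding xl vl by (rule scalar_prod_minus_distrib[OF rc' b' b, symmetric])
        moreover have "\<bar>rh I l \<bullet> (b' - b)\<bar> \<le> C * vnorm (b' - b)"
        proof -
          have "(\<Sum>l'<m. \<bar>rh I l $ l'\<bar>) \<le> C" using Cge[of I l] bI True unfolding Bs_def by simp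
          hence "(\<Sum>l'<m. \<bar>rh I l $ l'\<bar>) * vnorm (b' - b) \<le> C * vnorm (b' - b)"
            using vnorm_nonneg[of "b' - b"] by (rule mult_right_mono)
          thus ?thesis using abs_sp_le[OF rc' dc] by linarith
        qed
        moreover have vpos: "v $ l > 0" using v0[OF l] lS unfolding S_def by auto
        moreover have "eta \<le> v $ l" using eta_le[of I l] bI l vpos vIeq unfolding Bs_def by simp
        moreover have "C * vnorm (b' - b) < eta"
        proof -
          have "vnorm (b' - b) * (C + 1) < eps * (C + 1)" using close C0 by simp
          also have "\<dots> = eta" unfolding eps_def using C0 by simp
          finally have lt: "vnorm (b' - b) * (C + 1) < eta" .
          moreover have "C * vnorm (b' - b) \<le> vnorm (b' - b) * (C + 1)"
            using vnorm_nonneg[of "b' - b"] by (simp add: algebra_simps)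
          ultimately show ?thesis by linarith
        qed
        ultimately show ?thesis by linarith
      qed
    qed
    have Ax: "A *\<^sub>v x = b'" unfolding x_def by (rule xp(2))
    have xfeas: "x \<in> feas_set A b'"
      unfolding feas_set_def
    proof (intro CollectI conjI)
      show "x \<in> carrier_vec (dim_col A)" using xc A by simp
      show "A *\<^sub>v x = b'" by (rule Ax)
      show "0\<^sub>v (dim_col A) \<le> x" unfolding less_eq_vec_def using xc xnn A by simp
    qed
    have xopt: "x \<in> opt_set A c b'"
      unfolding opt_set_def
    proof (intro CollectI conjI ballI)
      show "x \<in> feas_set A b'" by (rule xfeas)
      fix y assume y: "y \<in> feas_set A b'"
      have yc: "y \<in> carrier_vec d" and Ay: "A *\<^sub>v y = b'" and yle: "0\<^sub>v d \<le> y"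
        using y A unfolding feas_set_def by auto
      have y0: "y $ l \<ge> 0" if l: "l < d" for l
        using yle l yc unfolding less_eq_vec_def by auto
      show "c \<bullet> x \<le> c \<bullet> y"
      proof (rule weak_dual[OF A bI c dfI _ Ax yc Ay y0])
        show "supp_on d I x" unfolding x_def by (rule xp(1))
      qed
    qed
    show "\<exists>I\<in>{I \<in> opt_bases A b c. basic_sol A I b = basic_sol A J b}. basic_sol A I b' \<in> opt_set A c b'"
      using IO vIeq xopt unfolding v_def x_def by auto
  qed
qed


end
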